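(* Fix $n\ge 2$, a dictator agent $t$, another agent $i\ne t$, and a constant $a\in(0,\frac12)$. For $b\in(0,1)$ and a profile $\mathbf{x}$ with $x_l=\min\mathbf{x}$, $x_r=\max\mathbf{x}$, $L=x_r-x_l$, define $$h_b(\mathbf{x})=\begin{cases} x_t+\max\left\{\frac{2(1-b)}{b}(x_t-x_l),\; x_r-x_t\right\} & \text{if } x_t\in[x_l,\,x_l+bL),\\[2pt] x_t-\max\left\{x_t-x_l,\; \frac{2b}{1-b}(x_r-x_t)\right\} & \text{if } x_t\in[x_l+bL,\,x_r].\end{cases}$$ Let $f$ be the mechanism that on $\mathbf{x}$ outputs $l_1=x_t$ and $l_2=h_a(\mathbf{x})$ if $x_i\le x_t$, and $l_2=h_{1-a}(\mathbf{x})$ if $x_i>x_t$. Then the approximation ratio of $f$ for social cost is $\frac{1-a}{a}(n-1)$, i.e. $SC(f,\mathbf{x})\le\frac{1-a}{a}(n-1)\,OPT(\mathbf{x})$ for every profile $\mathbf{x}\in\mathbb{R}^n$.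
   Context: Two-facility game on a line: agent $j$ has location $x_j\in\mathbb{R}$. For facility locations $\{l_1,l_2\}$, an agent at $y$ has cost $\min\{|l_1-y|,|l_2-y|\}$. $SC(f,\mathbf{x})$ is the sum over all agents of their costs under $f(\mathbf{x})$, and $OPT(\mathbf{x})=\min_{l_1,l_2\in\mathbb{R}}\sum_j\min\{|l_1-x_j|,|l_2-x_j|\}$. In the paper, "the approximation ratio of $f$ is $\gamma$" is defined to mean $SC(f,\mathbf{x})\le\gamma\,OPT(\mathbf{x})$ for all profiles $\mathbf{x}$. *)

theory Defs
  imports "HOL-Analysis.Analysis"
begin

text \<open>Agents are indexed by 0..n-1; a profile is a function x :: nat => real,
  of which only the values on {..<n} matter.\<close>

definition agent_cost :: "real \<times> real \<Rightarrow> real \<Rightarrow> real" where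
  "agent_cost l y = min \<bar>fst l - y\<bar> \<bar>snd l - y\<bar>"

definition social_cost :: "nat \<Rightarrow> real \<times> real \<Rightarrow> (nat \<Rightarrow> real) \<Rightarrow> real" where
  "social_cost n l x = (\<Sum>j<n. agent_cost l (x j))"

definition OPT :: "nat \<Rightarrow> (nat \<Rightarrow> real) \<Rightarrow> real" where
  "OPT n x = (INF l \<in> (UNIV :: (real \<times> real) set). social_cost n l x)"

definition xmin :: "nat \<Rightarrow> (nat \<Rightarrow> real) \<Rightarrow> real" where
  "xmin n x = Min (x ` {..<n})"

definition xmax :: "nat \<Rightarrow> (nat \<Rightarrow> real) \<Rightarrow> real" where
  "xmax n x = Max (x ` {..<n})"

definition h_fun :: "nat \<Rightarrow> nat \<Rightarrow> real \<Rightarrow> (nat \<Rightarrow> real) \<Rightarrow> real" where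
  "h_fun n t b x =
     (let xl = xmin n x; xr = xmax n x; L = xr - xl; xt = x t in
      if xt < xl + b * L
      then xt + max (2 * (1 - b) / b * (xt - xl)) (xr - xt)
      else xt - max (xt - xl) (2 * b / (1 - b) * (xr - xt)))"

definition mech :: "nat \<Rightarrow> nat \<Rightarrow> nat \<Rightarrow> real \<Rightarrow> (nat \<Rightarrow> real) \<Rightarrow> real \<times> real" where
  "mech n t i a x =
     (x t, if x i \<le> x t then h_fun n t a x else h_fun n t (1 - a) x)"

end

theory Submission
  imports Defs
begin

lemma three_cost:
  fixes l1 l2 p q r :: real
  assumes "p \<le> q" "q \<le> r"
  shows "min (q - p) (r - q) \<le> min \<bar>l1 - p\<bar> \<bar>l2 - p\<bar> + min \<bar>l1 - q\<bar> \<bar>l2 - q\<bar> + min \<bar>l1 - r\<bar> \<bar>l2 - r\<bar>"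
  using assms by (simp add: min_def abs_if split: if_splits)

lemma sc_nonneg: "0 \<le> social_cost n l x"
  unfolding social_cost_def agent_cost_def by (intro sum_nonneg) auto

lemma OPT_nonneg: "0 \<le> OPT n x"
  unfolding OPT_def by (rule cINF_greatest) (auto simp: sc_nonneg)

lemma OPT_three:
  assumes "p < n" "q < n" "r < n" "x p \<le> x q" "x q \<le> x r"
  shows "min (x q - x p) (x r - x q) \<le> OPT n x"
proof (cases "p = q \<or> q = r \<or> p = r")
  case True
  then have "min (x q - x p) (x r - x q) \<le> 0" using assms by auto
  then show ?thesis using OPT_nonneg[of n x] by linarith
next
  case False
  show ?thesis unfolding OPT_def
  proof (rule cINF_greatest)
    fix l :: "real \<times> real"
    have "social_cost n l x = (\<Sum>j\<in>{p,q,r}. agent_cost l (x j)) + (\<Sum>j\<in>{..<n} - {p,q,r}. agent_cost l (x j))"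
      unfolding social_cost_def using assms
      by (subst sum.subset_diff[of "{p,q,r}"]) auto
    moreover have "0 \<le> (\<Sum>j\<in>{..<n} - {p,q,r}. agent_cost l (x j))"
      unfolding agent_cost_def by (intro sum_nonneg) auto
    moreover have "(\<Sum>j\<in>{p,q,r}. agent_cost l (x j)) = agent_cost l (x p) + agent_cost l (x q) + agent_cost l (x r)"
      using False by simp
    moreover have "min (x q - x p) (x r - x q) \<le> agent_cost l (x p) + agent_cost l (x q) + agent_cost l (x r)"
      unfolding agent_cost_def using three_cost assms(4,5) by blast
    ultimately show "min (x q - x p) (x r - x q) \<le> social_cost n l x" by linarith
  qed auto
qed



lemma aux_right:
  fixes c K Op d e u :: real
  assumes "c*d/2 \<le> K*d" "Op \<le> K*Op" "d \<le> Op \<Longrightarrow> K*d \<le> K*Op" "0 \<le> d" "0 \<le> u" "u \<le> e"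
    "min d u \<le> Op" "min u (e-u) \<le> Op"
  shows "min u \<bar>max (c*d) e - u\<bar> \<le> K*Op"
proof (cases "u \<le> e - u")
  case True then show ?thesis using assms by (auto simp: min_def split: if_splits)
next
  case F1: False
  show ?thesis
  proof (cases "u \<le> d")
    case True then show ?thesis using assms by (auto simp: min_def split: if_splits)
  next
    case False
    then have "d \<le> Op" using assms(7) by (auto simp: min_def split: if_splits)
    then have "K*d \<le> K*Op" using assms(3) by blast
    then show ?thesis using assms F1 False by (auto simp: min_def max_def split: if_splits)
  qed
qed

lemma aux_left:
  fixes c K Op d e v :: real
  assumes "c*e/2 \<le> K*e" "Op \<le> K*Op" "e \<le> Op \<Longrightarrow> K*e \<le> K*Op" "0 \<le> e" "0 \<le> v" "v \<le> d"
    "min (d-v) v \<le> Op" "min v e \<le> Op"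
  shows "min v \<bar>max d (c*e) - v\<bar> \<le> K*Op"
proof (cases "v \<le> d - v")
  case True then show ?thesis using assms by (auto simp: min_def split: if_splits)
next
  case F1: False
  show ?thesis
  proof (cases "v \<le> e")
    case True then show ?thesis using assms by (auto simp: min_def split: if_splits)
  next
    case False
    then have "e \<le> Op" using assms(8) by (auto simp: min_def split: if_splits)
    then have "K*e \<le> K*Op" using assms(3) by blast
    then show ?thesis using assms F1 False by (auto simp: min_def max_def split: if_splits)
  qed
qed
lemma case1_right:
  fixes b K Op xl xt xr y :: real
  assumes "0 < b" "b < 1" "(1-b)/b \<le> K" "1 \<le> K" "xl \<le> xt" "xt \<le> y" "y \<le> xr" "0 \<le> Op"
    "min (xt-xl) (y-xt) \<le> Op" "min (y-xt) (xr-y) \<le> Op"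
  shows "min \<bar>xt - y\<bar> \<bar>xt + max (2*(1-b)/b*(xt-xl)) (xr-xt) - y\<bar> \<le> K*Op"
proof -
  define d where "d = xt - xl"
  have h0: "2*(1-b)/b*d / 2 = (1-b)/b*d" using assms(1,2) by (simp add: field_simps)
  have h1: "2*(1-b)/b*d / 2 \<le> K * d"
    unfolding h0 using mult_right_mono[OF assms(3), of d] assms(5) by (simp add: d_def)
  have h2: "Op \<le> K*Op" using assms(4,8) by (simp add: mult_right_mono[of 1 K Op, simplified])
  have h3: "d \<le> Op \<Longrightarrow> K*d \<le> K*Op" using assms(4) by (simp add: mult_left_mono)
  have "min \<bar>xt - y\<bar> \<bar>xt + max (2*(1-b)/b*(xt-xl)) (xr-xt) - y\<bar>
      = min (y - xt) \<bar>max (2*(1-b)/b*d) (xr-xt) - (y - xt)\<bar>"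
    using assms(6) by (simp add: d_def)
  also have "\<dots> \<le> K*Op"
    by (rule aux_right[OF h1 h2 h3]) (use assms(5-10) in \<open>auto simp: d_def\<close>)
  finally show ?thesis .
qed

lemma case1_left:
  fixes b K Op xl xt xr y :: real
  assumes "0 < b" "b < 1" "b/(1-b) \<le> K" "1 \<le> K" "xl \<le> y" "y \<le> xt" "xt \<le> xr" "0 \<le> Op"
    "xt < xl + b * (xr - xl)" "min (xt-y) (xr-xt) \<le> Op"
  shows "min \<bar>xt - y\<bar> \<bar>xt + max (2*(1-b)/b*(xt-xl)) (xr-xt) - y\<bar> \<le> K*Op"
proof -
  define d where "d = xt - xl"
  define e where "e = xr - xt"
  have "d * (1-b) < b * e" using assms(9) unfolding d_def e_def by (simp add: algebra_simps)
  then have "d < b/(1-b) * e" using assms(2) by (simp add: field_simps)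
  also have "\<dots> \<le> K * e" using mult_right_mono[OF assms(3), of e] assms(7) by (simp add: e_def)
  finally have h1: "d < K*e" .
  have h2: "Op \<le> K*Op" using assms(4,8) by (simp add: mult_right_mono[of 1 K Op, simplified])
  have h3: "e \<le> Op \<Longrightarrow> K*e \<le> K*Op" using assms(4) by (simp add: mult_left_mono)
  have "min \<bar>xt - y\<bar> \<bar>xt + max (2*(1-b)/b*(xt-xl)) (xr-xt) - y\<bar> \<le> xt - y" using assms(6) by simp
  then show ?thesis using h1 h2 h3 assms(5-10) unfolding d_def e_def
    by (cases "xr - xt \<le> Op") (auto simp: min_def split: if_splits)
qed

lemma case2_right:
  fixes b K Op xl xt xr y :: real
  assumes "0 < b" "b < 1" "(1-b)/b \<le> K" "1 \<le> K" "xl \<le> xt" "xt \<le> y" "y \<le> xr" "0 \<le> Op"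
    "\<not> xt < xl + b * (xr - xl)" "min (xt-xl) (y-xt) \<le> Op"
  shows "min \<bar>xt - y\<bar> \<bar>xt - max (xt-xl) (2*b/(1-b)*(xr-xt)) - y\<bar> \<le> K*Op"
proof -
  define d where "d = xt - xl"
  define e where "e = xr - xt"
  have "b * e \<le> d * (1-b)" using assms(9) unfolding d_def e_def by (simp add: algebra_simps)
  then have "e \<le> (1-b)/b * d" using assms(1) by (simp add: field_simps)
  also have "\<dots> \<le> K * d" using mult_right_mono[OF assms(3), of d] assms(5) by (simp add: d_def)
  finally have h1: "e \<le> K*d" .
  have h2: "Op \<le> K*Op" using assms(4,8) by (simp add: mult_right_mono[of 1 K Op, simplified])
  have h3: "d \<le> Op \<Longrightarrow> K*d \<le> K*Op" using assms(4) by (simp add: mult_left_mono)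
  have "min \<bar>xt - y\<bar> \<bar>xt - max (xt-xl) (2*b/(1-b)*(xr-xt)) - y\<bar> \<le> y - xt" using assms(6) by simp
  then show ?thesis using h1 h2 h3 assms(5-10) unfolding d_def e_def
    by (cases "xt - xl \<le> Op") (auto simp: min_def split: if_splits)
qed

lemma case2_left:
  fixes b K Op xl xt xr y :: real
  assumes "0 < b" "b < 1" "b/(1-b) \<le> K" "1 \<le> K" "xl \<le> y" "y \<le> xt" "xt \<le> xr" "0 \<le> Op"
    "min (y-xl) (xt-y) \<le> Op" "min (xt-y) (xr-xt) \<le> Op"
  shows "min \<bar>xt - y\<bar> \<bar>xt - max (xt-xl) (2*b/(1-b)*(xr-xt)) - y\<bar> \<le> K*Op"
proof -
  define e where "e = xr - xt"
  have h0: "2*b/(1-b)*e / 2 = b/(1-b)*e" using assms(1,2) by (simp add: field_simps)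
  have h1: "2*b/(1-b)*e / 2 \<le> K * e"
    unfolding h0 using mult_right_mono[OF assms(3), of e] assms(7) by (simp add: e_def)
  have h2: "Op \<le> K*Op" using assms(4,8) by (simp add: mult_right_mono[of 1 K Op, simplified])
  have h3: "e \<le> Op \<Longrightarrow> K*e \<le> K*Op" using assms(4) by (simp add: mult_left_mono)
  have "min \<bar>xt - y\<bar> \<bar>xt - max (xt-xl) (2*b/(1-b)*(xr-xt)) - y\<bar>
      = min (xt - y) \<bar>max (xt-xl) (2*b/(1-b)*e) - (xt - y)\<bar>"
    using assms(6) by (simp add: e_def abs_minus_commute)
  also have "\<dots> \<le> K*Op"
    by (rule aux_left[OF h1 h2 h3]) (use assms(5-10) in \<open>auto simp: e_def\<close>)
  finally show ?thesis .
qed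


lemma agent_bound:
  fixes b K :: real
  assumes "0 < b" "b < 1" "(1-b)/b \<le> K" "b/(1-b) \<le> K" "1 \<le> K" "t < n" "j < n"
  shows "agent_cost (x t, h_fun n t b x) (x j) \<le> K * OPT n x"
proof -
  define xl where "xl = xmin n x"
  define xr where "xr = xmax n x"
  have ne: "x ` {..<n} \<noteq> {}" "finite (x ` {..<n})" using assms(6) by auto
  have lb: "xl \<le> x k" if "k < n" for k unfolding xl_def xmin_def using that ne by auto
  have ub: "x k \<le> xr" if "k < n" for k unfolding xr_def xmax_def using that ne by auto
  obtain il where il: "il < n" "x il = xl" using Min_in[OF ne(2) ne(1)] unfolding xl_def xmin_def by auto
  obtain ir where ir: "ir < n" "x ir = xr" using Max_in[OF ne(2) ne(1)] unfolding xr_def xmax_def by auto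
  have O0: "0 \<le> OPT n x" by (rule OPT_nonneg)
  have hdef: "h_fun n t b x = (if x t < xl + b * (xr - xl)
      then x t + max (2 * (1 - b) / b * (x t - xl)) (xr - x t)
      else x t - max (x t - xl) (2 * b / (1 - b) * (xr - x t)))"
    unfolding h_fun_def xl_def xr_def Let_def by simp
  have lt: "xl \<le> x t" "x t \<le> xr" "xl \<le> x j" "x j \<le> xr" using lb ub assms(6,7) by auto
  show ?thesis
  proof (cases "x t < xl + b * (xr - xl)")
    case C: True
    show ?thesis
    proof (cases "x j \<le> x t")
      case True
      have T1: "min (x t - x j) (xr - x t) \<le> OPT n x"
        using OPT_three[of j n t ir x] assms ir True lt by auto
      show ?thesis unfolding agent_cost_def hdef using C
        case1_left[OF assms(1,2,4,5) lt(3) True lt(2) O0 C T1] by simp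
    next
      case False
      have T3: "min (x t - xl) (x j - x t) \<le> OPT n x"
        using OPT_three[of il n t j x] assms il False lt by auto
      have T4: "min (x j - x t) (xr - x j) \<le> OPT n x"
        using OPT_three[of t n j ir x] assms ir False lt by auto
      show ?thesis unfolding agent_cost_def hdef using C
        case1_right[OF assms(1,2,3,5) lt(1) _ lt(4) O0 T3 T4] False by simp
    qed
  next
    case C: False
    show ?thesis
    proof (cases "x j \<le> x t")
      case True
      have T1: "min (x t - x j) (xr - x t) \<le> OPT n x"
        using OPT_three[of j n t ir x] assms ir True lt by auto
      have T2: "min (x j - xl) (x t - x j) \<le> OPT n x"
        using OPT_three[of il n j t x] assms il True lt by auto
      show ?thesis unfolding agent_cost_def hdef using C
        case2_left[OF assms(1,2,4,5) lt(3) True lt(2) O0 T2 T1] by simp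
    next
      case False
      have T3: "min (x t - xl) (x j - x t) \<le> OPT n x"
        using OPT_three[of il n t j x] assms il False lt by auto
      show ?thesis unfolding agent_cost_def hdef using C
        case2_right[OF assms(1,2,3,5) lt(1) _ lt(4) O0 C T3] False by simp
    qed
  qed
qed

theorem theorem8:
  fixes n t i :: nat and a :: real
  assumes "n \<ge> 2" and "t < n" and "i < n" and "i \<noteq> t"
    and "0 < a" and "a < 1 / 2"
  shows "\<forall>x :: nat \<Rightarrow> real.
           social_cost n (mech n t i a x) x \<le> (1 - a) / a * (real n - 1) * OPT n x"
proof
  fix x :: "nat \<Rightarrow> real"
  define K where "K = (1 - a) / a"
  have K1: "1 \<le> K" unfolding K_def using assms(5,6) by (simp add: field_simps)
  have K2: "a / (1 - a) \<le> K" unfolding K_def using assms(5,6)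
    by (simp add: field_simps)
  obtain b where b: "0 < b" "b < 1" "(1-b)/b \<le> K" "b/(1-b) \<le> K"
    "mech n t i a x = (x t, h_fun n t b x)"
  proof (cases "x i \<le> x t")
    case True
    show ?thesis by (rule that[of a]) (use assms(5,6) K2 True in \<open>auto simp: K_def mech_def\<close>)
  next
    case False
    show ?thesis by (rule that[of "1 - a"]) (use assms(5,6) K2 False in \<open>auto simp: K_def mech_def\<close>)
  qed
  have "social_cost n (mech n t i a x) x = (\<Sum>j\<in>{..<n} - {t}. agent_cost (x t, h_fun n t b x) (x j))"
    unfolding social_cost_def b(5) using assms(2)
    by (subst sum.remove[of _ t]) (auto simp: agent_cost_def)
  also have "\<dots> \<le> (\<Sum>j\<in>{..<n} - {t}. K * OPT n x)"
    by (rule sum_mono) (use agent_bound[OF b(1-4) K1 assms(2)] in auto)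
  also have "\<dots> = (real n - 1) * (K * OPT n x)"
    using assms(2) by (simp add: of_nat_diff)
  finally show "social_cost n (mech n t i a x) x \<le> (1 - a) / a * (real n - 1) * OPT n x"
    unfolding K_def by (simp add: mult_ac)
qed

end
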